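(* Let $\mathcal{M}$ be a finite irreducible Markov chain with state set $S$ and reward function $r:S\to\{-1,0,1\}$, and let $\emptyset\ne R\subseteq S$. For $u\in R$ let $\mu_u=\mathbb{E}_u\big[\sum_{i=0}^{T_R-1}r(w(i))\big]$ where $T_R(w)=\min\{i\ge1\mid w(i)\in R\}$ (the expected reward accumulated from a visit to $u$, inclusive, up to the next visit to $R$, exclusive). Let $t\in R$. If $\mu_u>0$ for all $u\in R$, then $\mathbb{P}_t(\mathrm{LimInf}(=+\infty))=1$. If $\mu_u\le0$ for all $u\in R$, then $\mathbb{P}_t(\mathrm{LimInf}(=+\infty))=0$.
   Context: $\mathbb{P}_t$, $\mathbb{E}_t$ denote probability and expectation over runs of $\mathcal{M}$ starting in $t$. $\mathrm{LimInf}(=+\infty)=\{w\mid\liminf_{n}\sum_{i=0}^n r(w(i))=+\infty\}$. *)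

theory Defs
  imports "HOL-Probability.Probability"
begin

(* The law of its runs is realised by the random-mapping representation: an i.i.d. sequence of
   random "next-state tables" xi_n :: 's => 's, with the xi_n(s) (s in S) independent and
   xi_n(s) distributed as K s. *)

definition tables :: "('s \<Rightarrow> 's pmf) \<Rightarrow> ('s \<Rightarrow> 's) measure" where
  "tables K = PiM UNIV (\<lambda>s. measure_pmf (K s))"

definition noise :: "('s \<Rightarrow> 's pmf) \<Rightarrow> ('s \<Rightarrow> 's) stream measure" where
  "noise K = stream_space (tables K)"

fun run :: "'s \<Rightarrow> ('s \<Rightarrow> 's) stream \<Rightarrow> nat \<Rightarrow> 's" where
  "run t \<omega> 0 = t"
| "run t \<omega> (Suc n) = run (shd \<omega> t) (stl \<omega>) n"

definition Prob_from :: "('s \<Rightarrow> 's pmf) \<Rightarrow> 's \<Rightarrow> (nat \<Rightarrow> 's) set \<Rightarrow> real" where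
  "Prob_from K t A = measure (noise K) {\<omega> \<in> space (noise K). run t \<omega> \<in> A}"

definition Exp_from :: "('s \<Rightarrow> 's pmf) \<Rightarrow> 's \<Rightarrow> ((nat \<Rightarrow> 's) \<Rightarrow> real) \<Rightarrow> real" where
  "Exp_from K t f = (\<integral>\<omega>. f (run t \<omega>) \<partial>noise K)"

definition irreducible :: "('s \<Rightarrow> 's pmf) \<Rightarrow> bool" where
  "irreducible K \<longleftrightarrow> (\<forall>s s'. (s, s') \<in> {(x, y). y \<in> set_pmf (K x)}\<^sup>*)"

definition return_time :: "'s set \<Rightarrow> (nat \<Rightarrow> 's) \<Rightarrow> nat" where
  "return_time R w = (LEAST i. 1 \<le> i \<and> w i \<in> R)"

definition mu :: "('s \<Rightarrow> 's pmf) \<Rightarrow> ('s \<Rightarrow> int) \<Rightarrow> 's set \<Rightarrow> 's \<Rightarrow> real" where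
  "mu K r R u = Exp_from K u (\<lambda>w. real_of_int (\<Sum>i<return_time R w. r (w i)))"

definition LimInf_infty :: "('s \<Rightarrow> int) \<Rightarrow> (nat \<Rightarrow> 's) set" where
  "LimInf_infty r = {w. liminf (\<lambda>n. ereal (real_of_int (\<Sum>i\<le>n. r (w i)))) = \<infinity>}"

end

theory Submission
  imports Defs
begin

context fixes K :: "'s::finite \<Rightarrow> 's pmf" begin

abbreviation PS :: "(nat \<Rightarrow> 's::finite) measure" where "PS \<equiv> PiM UNIV (\<lambda>_. count_space UNIV)"

lemma prob_space_tables: "prob_space (tables K)"
  unfolding tables_def by (intro prob_space_PiM) (auto intro: prob_space_measure_pmf)

lemma prob_space_noise: "prob_space (noise K)"
  unfolding noise_def using prob_space.prob_space_stream_space[OF prob_space_tables] .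

lemma space_tables: "space (tables K) = UNIV"
  unfolding tables_def by (simp add: space_PiM)

lemma meas_eval: "(\<lambda>x. x t) \<in> tables K \<rightarrow>\<^sub>M count_space UNIV"
proof -
  have "(\<lambda>x. x t) \<in> tables K \<rightarrow>\<^sub>M measure_pmf (K t)"
    unfolding tables_def by (rule measurable_component_singleton) simp
  then show ?thesis by (simp add: measurable_def space_tables)
qed

lemma measurable_run_n: "(\<lambda>\<omega>. run t \<omega> n) \<in> noise K \<rightarrow>\<^sub>M count_space UNIV"
proof (induction n arbitrary: t)
  case 0
  then show ?case by simp
next
  case (Suc n)
  have sh: "(\<lambda>\<omega>. shd \<omega> t) \<in> noise K \<rightarrow>\<^sub>M count_space UNIV"
    unfolding noise_def using measurable_shd meas_eval by (rule measurable_compose)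
  have "(\<lambda>\<omega>. run (shd \<omega> t) (stl \<omega>) n) \<in> noise K \<rightarrow>\<^sub>M count_space UNIV"
    apply (rule measurable_compose_countable'[where I=UNIV, OF _ sh])
    subgoal for s using measurable_compose[OF measurable_stl Suc[of s, unfolded noise_def]] unfolding noise_def by simp
    by simp
  then show ?case by simp
qed

lemma measurable_run: "run t \<in> noise K \<rightarrow>\<^sub>M PS"
  by (rule measurable_PiM_single') (auto intro: measurable_run_n)

lemma run_Stream: "run t (x ## X) = case_nat t (run (x t) X)"
  by (rule ext) (simp split: nat.split)

lemma measurable_case_nat_PS: "case_nat t \<in> PS \<rightarrow>\<^sub>M PS"
  by (rule measurable_PiM_single') (auto split: nat.split intro: measurable_component_singleton)

lemma OS:
  assumes f: "f \<in> borel_measurable PS"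
  shows "(\<integral>\<^sup>+\<omega>. f (run t \<omega>) \<partial>noise K) =
     (\<Sum>s\<in>UNIV. ennreal (pmf (K t) s) * (\<integral>\<^sup>+\<omega>. f (case_nat t (run s \<omega>)) \<partial>noise K))"
proof -
  interpret T: prob_space "tables K" by (rule prob_space_tables)
  have fr: "(\<lambda>\<omega>. f (run t \<omega>)) \<in> borel_measurable (stream_space (tables K))"
    using measurable_compose[OF measurable_run f] unfolding noise_def .
  define H where "H s = (\<integral>\<^sup>+\<omega>. f (case_nat t (run s \<omega>)) \<partial>noise K)" for s
  have "(\<integral>\<^sup>+\<omega>. f (run t \<omega>) \<partial>noise K) = (\<integral>\<^sup>+x. (\<integral>\<^sup>+X. f (run t (x ## X)) \<partial>noise K) \<partial>tables K)"
    unfolding noise_def by (rule T.nn_integral_stream_space[OF fr])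
  also have "\<dots> = (\<integral>\<^sup>+x. H (x t) \<partial>tables K)"
    by (simp add: run_Stream H_def)
  also have "\<dots> = (\<integral>\<^sup>+s. H s \<partial>distr (tables K) (measure_pmf (K t)) (\<lambda>x. x t))"
    by (subst nn_integral_distr) (auto simp: tables_def intro: measurable_component_singleton)
  also have "distr (tables K) (measure_pmf (K t)) (\<lambda>x. x t) = measure_pmf (K t)"
  proof -
    interpret P: product_prob_space "\<lambda>s. measure_pmf (K s)" UNIV
      by unfold_locales (auto intro: prob_space_measure_pmf)
    show ?thesis unfolding tables_def by (rule P.PiM_component) simp
  qed
  also have "(\<integral>\<^sup>+s. H s \<partial>measure_pmf (K t)) = (\<Sum>s\<in>UNIV. ennreal (pmf (K t) s) * H s)"
    by (simp add: nn_integral_measure_pmf, subst nn_integral_count_space_finite) auto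
  finally show ?thesis unfolding H_def .
qed

end

context fixes K :: "'s::finite \<Rightarrow> 's pmf" begin

definition E :: "'s \<Rightarrow> ((nat \<Rightarrow> 's) \<Rightarrow> ennreal) \<Rightarrow> ennreal" where
  "E t f = (\<integral>\<^sup>+\<omega>. f (run t \<omega>) \<partial>noise K)"

lemma coord_meas: "(\<lambda>w. w i) \<in> (PS :: (nat \<Rightarrow> 's) measure) \<rightarrow>\<^sub>M count_space UNIV"
  by (rule measurable_component_singleton) simp

lemma count_meas: "(F :: 's \<Rightarrow> 'b::topological_space) \<in> count_space UNIV \<rightarrow>\<^sub>M borel"
  by simp

lemma count_pred: "(P :: 's \<Rightarrow> bool) \<in> count_space UNIV \<rightarrow>\<^sub>M count_space UNIV"
  by simp

lemma E_OS: "f \<in> borel_measurable PS \<Longrightarrow>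
   E t f = (\<Sum>s\<in>UNIV. ennreal (pmf (K t) s) * E s (\<lambda>w. f (case_nat t w)))"
  unfolding E_def by (rule OS)

lemma E_const[simp]: "E t (\<lambda>_. c) = c"
proof -
  interpret prob_space "noise K" by (rule prob_space_noise)
  show ?thesis unfolding E_def by (simp add: emeasure_space_1)
qed

lemma E_cmult: "f \<in> borel_measurable PS \<Longrightarrow> E t (\<lambda>w. c * f w) = c * E t f"
  unfolding E_def by (rule nn_integral_cmult) (rule measurable_compose[OF measurable_run])

lemma E_add: "f \<in> borel_measurable PS \<Longrightarrow> g \<in> borel_measurable PS \<Longrightarrow>
    E t (\<lambda>w. f w + g w) = E t f + E t g"
  unfolding E_def by (rule nn_integral_add) (auto intro: measurable_compose[OF measurable_run])

lemma E_mono: "(\<And>w. f w \<le> g w) \<Longrightarrow> E t f \<le> E t g"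
  unfolding E_def by (rule nn_integral_mono) auto

lemma E_suminf: "(\<And>i. f i \<in> borel_measurable PS) \<Longrightarrow> E t (\<lambda>w. \<Sum>i. f i w) = (\<Sum>i. E t (f i))"
  unfolding E_def by (rule nn_integral_suminf) (auto intro: measurable_compose[OF measurable_run])

lemma sum_p: "(\<Sum>s\<in>UNIV. pmf (K t) s) = 1"
  by (rule sum_pmf_eq_1) auto

lemma sum_p_enn: "(\<Sum>s\<in>UNIV. ennreal (pmf (K t) s)) = 1"
  by (subst sum_ennreal) (auto simp: sum_p)

end

lemma m_coordF: "F \<in> UNIV \<rightarrow> space M \<Longrightarrow> (\<lambda>w. (F :: 's::finite \<Rightarrow> _) (w i)) \<in> PS \<rightarrow>\<^sub>M M"
  by (rule measurable_compose[OF coord_meas[where i=i]]) (simp add: measurable_count_space_eq1)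

lemma m_NH[measurable]: "Measurable.pred (PS::(nat \<Rightarrow> 's::finite) measure) (\<lambda>w. \<forall>i<n. w i \<notin> A)"
proof (rule pred_intros_countable)
  fix i show "Measurable.pred (PS::(nat \<Rightarrow> 's::finite) measure) (\<lambda>w. i < n \<longrightarrow> w i \<notin> A)"
  proof (cases "i < n")
    case True
    have "Measurable.pred (PS::(nat \<Rightarrow> 's::finite) measure) (\<lambda>w. w i \<notin> A)"
      by (rule m_coordF[where F="\<lambda>s. s \<notin> A"]) simp
    then show ?thesis using True by simp
  qed simp
qed

lemma m_NH'[measurable]: "Measurable.pred (PS::(nat \<Rightarrow> 's::finite) measure) (\<lambda>w. \<forall>i<n. w (Suc i) \<notin> A)"
proof (rule pred_intros_countable)
  fix i show "Measurable.pred (PS::(nat \<Rightarrow> 's::finite) measure) (\<lambda>w. i < n \<longrightarrow> w (Suc i) \<notin> A)"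
  proof (cases "i < n")
    case True
    have "Measurable.pred (PS::(nat \<Rightarrow> 's::finite) measure) (\<lambda>w. w (Suc i) \<notin> A)"
      by (rule m_coordF[where F="\<lambda>s. s \<notin> A"]) simp
    then show ?thesis using True by simp
  qed simp
qed

lemma m_real: "(\<lambda>w. (F :: 's::finite \<Rightarrow> real) (w i)) \<in> borel_measurable PS"
  by (rule m_coordF) simp

lemma all_case_nat: "(\<forall>i<Suc n. case_nat x w i \<notin> A) \<longleftrightarrow> x \<notin> A \<and> (\<forall>i<n. w i \<notin> A)"
  by (simp add: All_less_Suc2)


context fixes K :: "'s::finite \<Rightarrow> 's pmf" and R :: "'s set" begin

fun qa :: "nat \<Rightarrow> 's \<Rightarrow> real" where
  "qa 0 x = 1"
| "qa (Suc n) x = (if x \<in> R then 0 else (\<Sum>s\<in>UNIV. pmf (K x) s * qa n s))"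

lemma qa_nonneg: "0 \<le> qa n x"
  by (induction n arbitrary: x) (auto intro!: sum_nonneg)

lemma qa_le1: "qa n x \<le> 1"
proof (induction n arbitrary: x)
  case (Suc n)
  have "(\<Sum>s\<in>UNIV. pmf (K x) s * qa n s) \<le> (\<Sum>s\<in>UNIV. pmf (K x) s * 1)"
    by (intro sum_mono mult_left_mono Suc) auto
  then show ?case by (simp add: sum_p)
qed simp

lemma qa_Suc_le: "qa (Suc n) x \<le> qa n x"
proof (induction n arbitrary: x)
  case 0 then show ?case using qa_le1[of 1 x] by simp
next
  case (Suc n)
  have "(\<Sum>s\<in>UNIV. pmf (K x) s * qa (Suc n) s) \<le> (\<Sum>s\<in>UNIV. pmf (K x) s * qa n s)"
    by (intro sum_mono mult_left_mono Suc) auto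
  then show ?case by simp
qed

lemma qa_antimono: "n \<le> m \<Longrightarrow> qa m x \<le> qa n x"
proof (induction m rule: dec_induct)
  case (step m)
  then show ?case using qa_Suc_le[of m x] by linarith
qed simp

lemma qa_E: "E K x (\<lambda>w. if (\<forall>i<n. w i \<notin> R) then 1 else 0) = ennreal (qa n x)"
proof (induction n arbitrary: x)
  case 0 then show ?case by simp
next
  case (Suc n)
  have m: "(\<lambda>w. if (\<forall>i<Suc n. w i \<notin> R) then 1 else (0::ennreal)) \<in> borel_measurable PS"
    by measurable
  have "E K x (\<lambda>w. if (\<forall>i<Suc n. w i \<notin> R) then 1 else 0) =
     (\<Sum>s\<in>UNIV. ennreal (pmf (K x) s) * E K s (\<lambda>w. if (\<forall>i<Suc n. case_nat x w i \<notin> R) then 1 else 0))"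
    by (rule E_OS[OF m])
  also have "\<dots> = (\<Sum>s\<in>UNIV. ennreal (pmf (K x) s) * (if x \<in> R then 0 else ennreal (qa n s)))"
  proof (intro sum.cong refl arg_cong2[where f="(*)"])
    fix s
    have "(\<lambda>w. if (\<forall>i<Suc n. case_nat x w i \<notin> R) then 1 else (0::ennreal)) =
       (\<lambda>w. if x \<in> R then 0 else if (\<forall>i<n. w i \<notin> R) then 1 else 0)"
      by (simp only: all_case_nat) auto
    then show "E K s (\<lambda>w. if (\<forall>i<Suc n. case_nat x w i \<notin> R) then 1 else (0::ennreal)) =
       (if x \<in> R then 0 else ennreal (qa n s))"
      using Suc by simp
  qed
  also have "\<dots> = ennreal (qa (Suc n) x)"
  proof (cases "x \<in> R")
    case False
    then show ?thesis
      by (simp add: sum_ennreal[symmetric] ennreal_mult qa_nonneg)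
  qed simp
  finally show ?case .
qed

definition Mq :: "nat \<Rightarrow> real" where "Mq n = Max (range (qa n))"

lemma qa_le_Mq: "qa n x \<le> Mq n"
  unfolding Mq_def by (rule Max_ge) auto

lemma Mq_nonneg: "0 \<le> Mq n"
  using qa_le_Mq[of n undefined] qa_nonneg[of n undefined] by linarith

lemma qa_submult: "qa (n + m) x \<le> Mq n * qa m x"
proof (induction m arbitrary: x)
  case 0 then show ?case using qa_le_Mq[of n x] by simp
next
  case (Suc m)
  have "(\<Sum>s\<in>UNIV. pmf (K x) s * qa (n+m) s) \<le> (\<Sum>s\<in>UNIV. pmf (K x) s * (Mq n * qa m s))"
    by (intro sum_mono mult_left_mono Suc) auto
  then show ?case by (simp add: sum_distrib_left algebra_simps)
qed

lemma Mq_submult: "Mq (n + m) \<le> Mq n * Mq m"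
proof -
  have "qa (n+m) x \<le> Mq n * Mq m" for x
    using qa_submult[of n m x] qa_le_Mq[of m x] Mq_nonneg[of n]
    by (meson mult_left_mono order_trans)
  then show ?thesis unfolding Mq_def[of "n+m"] by (subst Max_le_iff) auto
qed

end

context fixes K :: "'s::finite \<Rightarrow> 's pmf" and R :: "'s set"
  assumes irr: "irreducible K" and Rne: "R \<noteq> {}"
begin

lemma qa_lt1: "\<exists>k. qa K R k x < 1"
proof -
  obtain z where z: "z \<in> R" using Rne by auto
  have "(x, z) \<in> {(a, b). b \<in> set_pmf (K a)}\<^sup>*" using irr unfolding irreducible_def by blast
  then show ?thesis
  proof (induction rule: converse_rtrancl_induct)
    case base
    show ?case by (rule exI[of _ 1]) (simp add: z)
  next
    case (step y y')
    from step.IH obtain k where k: "qa K R k y' < 1" by blast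
    have py: "0 < pmf (K y) y'" using step.hyps(1) by (simp add: pmf_positive)
    show ?case
    proof (cases "y \<in> R")
      case True then show ?thesis by (intro exI[of _ "Suc k"]) simp
    next
      case False
      have "(\<Sum>s\<in>UNIV. pmf (K y) s * qa K R k s) < (\<Sum>s\<in>UNIV. pmf (K y) s * 1)"
      proof (rule sum_strict_mono_ex1)
        show "\<forall>s\<in>UNIV. pmf (K y) s * qa K R k s \<le> pmf (K y) s * 1"
          by (simp add: mult_left_le qa_le1)
        show "\<exists>s\<in>UNIV. pmf (K y) s * qa K R k s < pmf (K y) s * 1"
          using k py by (intro bexI[of _ y']) auto
      qed simp
      then show ?thesis using False by (intro exI[of _ "Suc k"]) (simp add: sum_p)
    qed
  qed
qed

lemma exists_N: "\<exists>N. 0 < N \<and> Mq K R N < 1"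
proof -
  obtain f where f: "\<And>x. qa K R (f x) x < 1" using qa_lt1 by metis
  define N where "N = Max (range f)"
  have qN: "qa K R N x < 1" for x
    using qa_antimono[of "f x" N K R x] f[of x] unfolding N_def by (meson Max_ge finite rangeI finite_imageI order.strict_trans1)
  then have lt: "Mq K R N < 1" unfolding Mq_def by (subst Max_less_iff) auto
  moreover have "N \<noteq> 0"
  proof
    assume "N = 0" then show False using qN[of undefined] by simp
  qed
  ultimately show ?thesis by blast
qed

lemma Mq_pow: "Mq K R (j * N) \<le> Mq K R N ^ j"
proof (induction j)
  case 0 then show ?case by (simp add: Mq_def)
next
  case (Suc j)
  have "Mq K R (N + j * N) \<le> Mq K R N * Mq K R (j * N)" by (rule Mq_submult)
  also have "\<dots> \<le> Mq K R N * Mq K R N ^ j" by (intro mult_left_mono Suc Mq_nonneg)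
  finally show ?case by (simp add: add.commute)
qed

lemma qa_geom: "\<exists>C b. 0 < b \<and> b < 1 \<and> (\<forall>n x. qa K R n x \<le> C * b ^ n)"
proof -
  obtain N where N: "0 < N" "Mq K R N < 1" using exists_N by blast
  define a where "a = max (Mq K R N) (1/2)"
  have a: "0 < a" "a < 1" "Mq K R N \<le> a" using N by (auto simp: a_def)
  define b where "b = root N a"
  have b: "0 < b" "b < 1" using a N by (auto simp: b_def)
  have bN: "b ^ N = a" using a N by (simp add: b_def)
  have "qa K R n x \<le> (1/a) * b ^ n" for n x
  proof -
    have "qa K R n x \<le> qa K R ((n div N) * N) x"
      by (rule qa_antimono) (simp add: div_times_less_eq_dividend)
    also have "\<dots> \<le> Mq K R ((n div N) * N)" by (rule qa_le_Mq)
    also have "\<dots> \<le> Mq K R N ^ (n div N)" by (rule Mq_pow)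
    also have "\<dots> \<le> a ^ (n div N)" using a by (intro power_mono) (auto simp: Mq_nonneg)
    also have "\<dots> = (1/a) * b ^ (N * (n div N) + N)"
      using a by (simp add: power_add power_mult bN)
    also have "\<dots> \<le> (1/a) * b ^ n"
    proof -
      have "n \<le> N * (n div N) + N"
        using N(1) by (metis add_le_cancel_left div_mult_mod_eq less_imp_le mod_less_divisor mult.commute)
      then show ?thesis using a b by (intro mult_left_mono power_decreasing) auto
    qed
    finally show ?thesis .
  qed
  then show ?thesis using b by blast
qed

lemma qa_summable: "summable (\<lambda>n. qa K R n x)"
proof -
  obtain C b where Cb: "0 < b" "b < 1" "\<And>n x. qa K R n x \<le> C * b ^ n" using qa_geom by blast
  show ?thesis
  proof (rule summable_comparison_test'[where g="\<lambda>n. C * b ^ n" and N=0])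
    show "summable (\<lambda>n. C * b ^ n)" using Cb by (intro summable_mult summable_geometric) auto
    show "norm (qa K R n x) \<le> C * b ^ n" for n
      using Cb(3)[of n x] qa_nonneg[of K R n x] by simp
  qed
qed

lemma qa_suminf_fin: "(\<Sum>n. ennreal (qa K R (Suc n) x)) < \<infinity>"
proof -
  have "summable (\<lambda>n. qa K R (Suc n) x)" by (subst summable_Suc_iff) (rule qa_summable)
  then show ?thesis by (subst suminf_ennreal2) (auto simp del: qa.simps simp: qa_nonneg)
qed

end

definition Hf :: "'s set \<Rightarrow> ('s \<Rightarrow> real) \<Rightarrow> (nat \<Rightarrow> 's) \<Rightarrow> ennreal" where
  "Hf R v w = (\<Sum>n. if (\<forall>i<Suc n. w i \<notin> R) then ennreal (v (w n)) else 0)"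

definition Gf :: "'s set \<Rightarrow> ('s \<Rightarrow> real) \<Rightarrow> (nat \<Rightarrow> 's) \<Rightarrow> ennreal" where
  "Gf R v w = (\<Sum>n. if (\<forall>i<n. w (Suc i) \<notin> R) then ennreal (v (w n)) else 0)"

lemma meas_Hf: "Hf R v \<in> borel_measurable (PS :: (nat \<Rightarrow> 's::finite) measure)"
proof -
  have [measurable]: "\<And>i. (\<lambda>w. v (w i)) \<in> borel_measurable (PS :: (nat \<Rightarrow> 's::finite) measure)"
    by (rule m_real)
  show ?thesis unfolding Hf_def by measurable
qed

lemma meas_Gf: "Gf R v \<in> borel_measurable (PS :: (nat \<Rightarrow> 's::finite) measure)"
proof -
  have [measurable]: "\<And>i. (\<lambda>w. v (w i)) \<in> borel_measurable (PS :: (nat \<Rightarrow> 's::finite) measure)"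
    by (rule m_real)
  show ?thesis unfolding Gf_def by measurable
qed

lemma Hf_case: "Hf R v (case_nat x w) = (if x \<in> R then 0 else ennreal (v x) + Hf R v w)"
proof -
  define f where "f = (\<lambda>n. if (\<forall>i<Suc n. case_nat x w i \<notin> R) then ennreal (v (case_nat x w n)) else 0)"
  have "suminf f = (\<Sum>j. f (j + 1)) + (\<Sum>j<1. f j)" by (rule suminf_offset) simp
  moreover have "f (j + 1) = (if x \<in> R then 0 else (if (\<forall>i<Suc j. w i \<notin> R) then ennreal (v (w j)) else 0))" for j
    unfolding f_def by (simp only: Suc_eq_plus1[symmetric] all_case_nat) auto
  moreover have "f 0 = (if x \<in> R then 0 else ennreal (v x))" unfolding f_def by simp
  ultimately show ?thesis unfolding Hf_def f_def[symmetric]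
    by (cases "x \<in> R") (simp_all add: add.commute)
qed

lemma Gf_case: "Gf R v (case_nat x w) = ennreal (v x) + Hf R v w"
proof -
  define f where "f = (\<lambda>n. if (\<forall>i<n. case_nat x w (Suc i) \<notin> R) then ennreal (v (case_nat x w n)) else 0)"
  have "suminf f = (\<Sum>j. f (j + 1)) + (\<Sum>j<1. f j)" by (rule suminf_offset) simp
  moreover have "f (j + 1) = (if (\<forall>i<Suc j. w i \<notin> R) then ennreal (v (w j)) else 0)" for j
    unfolding f_def by auto
  moreover have "f 0 = ennreal (v x)" unfolding f_def by simp
  ultimately show ?thesis unfolding Hf_def Gf_def f_def[symmetric]
    by (simp add: add.commute)
qed

context fixes K :: "'s::finite \<Rightarrow> 's pmf" begin

lemma sum_p_cmult: "(\<Sum>s\<in>UNIV. ennreal (pmf (K x) s) * (c + h s)) = c + (\<Sum>s\<in>UNIV. ennreal (pmf (K x) s) * h s)"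
proof -
  have "(\<Sum>s\<in>UNIV. ennreal (pmf (K x) s) * (c + h s)) = (\<Sum>s\<in>UNIV. ennreal (pmf (K x) s) * c) + (\<Sum>s\<in>UNIV. ennreal (pmf (K x) s) * h s)"
    by (simp add: distrib_left sum.distrib)
  also have "(\<Sum>s\<in>UNIV. ennreal (pmf (K x) s) * c) = (\<Sum>s\<in>UNIV. ennreal (pmf (K x) s)) * c"
    by (rule sum_distrib_right[symmetric])
  finally show ?thesis by (simp add: sum_p_enn)
qed

lemma hE_rec: "E K x (Hf R v) = (if x \<in> R then 0 else ennreal (v x) + (\<Sum>s\<in>UNIV. ennreal (pmf (K x) s) * E K s (Hf R v)))"
proof -
  have "E K x (Hf R v) = (\<Sum>s\<in>UNIV. ennreal (pmf (K x) s) * E K s (\<lambda>w. Hf R v (case_nat x w)))"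
    by (rule E_OS[OF meas_Hf])
  also have "\<dots> = (\<Sum>s\<in>UNIV. ennreal (pmf (K x) s) * (if x \<in> R then 0 else ennreal (v x) + E K s (Hf R v)))"
  proof (intro sum.cong refl arg_cong2[where f="(*)"])
    fix s
    show "E K s (\<lambda>w. Hf R v (case_nat x w)) = (if x \<in> R then 0 else ennreal (v x) + E K s (Hf R v))"
    proof (cases "x \<in> R")
      case True then show ?thesis by (simp add: Hf_case)
    next
      case False
      then have "E K s (\<lambda>w. Hf R v (case_nat x w)) = E K s (\<lambda>w. ennreal (v x) + Hf R v w)"
        by (simp add: Hf_case)
      also have "\<dots> = ennreal (v x) + E K s (Hf R v)"
        by (subst E_add) (auto intro: meas_Hf)
      finally show ?thesis using False by simp
    qed
  qed
  also have "\<dots> = (if x \<in> R then 0 else ennreal (v x) + (\<Sum>s\<in>UNIV. ennreal (pmf (K x) s) * E K s (Hf R v)))"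
    by (cases "x \<in> R") (simp_all add: sum_p_cmult)
  finally show ?thesis .
qed

lemma gE: "E K x (Gf R v) = ennreal (v x) + (\<Sum>s\<in>UNIV. ennreal (pmf (K x) s) * E K s (Hf R v))"
proof -
  have "E K x (Gf R v) = (\<Sum>s\<in>UNIV. ennreal (pmf (K x) s) * E K s (\<lambda>w. Gf R v (case_nat x w)))"
    by (rule E_OS[OF meas_Gf])
  also have "\<dots> = (\<Sum>s\<in>UNIV. ennreal (pmf (K x) s) * (ennreal (v x) + E K s (Hf R v)))"
  proof (intro sum.cong refl arg_cong2[where f="(*)"])
    fix s
    have "E K s (\<lambda>w. Gf R v (case_nat x w)) = E K s (\<lambda>w. ennreal (v x) + Hf R v w)"
      by (simp add: Gf_case)
    also have "\<dots> = ennreal (v x) + E K s (Hf R v)"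
      by (subst E_add) (auto intro: meas_Hf)
    finally show "E K s (\<lambda>w. Gf R v (case_nat x w)) = ennreal (v x) + E K s (Hf R v)" .
  qed
  also have "\<dots> = ennreal (v x) + (\<Sum>s\<in>UNIV. ennreal (pmf (K x) s) * E K s (Hf R v))"
    by (simp add: sum_p_cmult)
  finally show ?thesis .
qed

context fixes R :: "'s set" assumes irr: "irreducible K" and Rne: "R \<noteq> {}" begin

lemma hE_fin: "E K x (Hf R v) < \<infinity>"
proof -
  define B where "B = Max (range v)"
  have vB: "v s \<le> B" for s unfolding B_def by (rule Max_ge) auto
  have meas: "(\<lambda>w. if (\<forall>i<Suc n. w i \<notin> R) then 1 else (0::ennreal)) \<in> borel_measurable PS" for n
    by measurable
  have "E K x (Hf R v) \<le> E K x (\<lambda>w. \<Sum>n. ennreal B * (if (\<forall>i<Suc n. w i \<notin> R) then 1 else 0))"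
    unfolding Hf_def by (intro E_mono suminf_le) (auto simp: vB ennreal_leI)
  also have "\<dots> = (\<Sum>n. ennreal B * ennreal (qa K R (Suc n) x))"
    by (simp add: E_suminf E_cmult meas qa_E del: qa.simps)
  also have "\<dots> = ennreal B * (\<Sum>n. ennreal (qa K R (Suc n) x))"
    by (rule ennreal_suminf_cmult)
  also have "\<dots> < \<infinity>"
    using qa_suminf_fin[OF irr Rne] by (simp add: ennreal_mult_less_top)
  finally show ?thesis .
qed

end
end

lemma suminf_one_ennreal: "(\<Sum>n. (1::ennreal)) = \<infinity>"
  by (simp add: suminf_eq_SUP ennreal_SUP_of_nat_eq_top)

lemma Gf_hit: assumes "Gf R (\<lambda>_. 1) w \<noteq> \<infinity>" shows "\<exists>n. 1 \<le> n \<and> w n \<in> R"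
proof (rule ccontr)
  assume "\<not> ?thesis"
  then have "\<And>n. (\<forall>i<n. w (Suc i) \<notin> R)" by auto
  then have "Gf R (\<lambda>_. 1) w = (\<Sum>n. (1::ennreal))" unfolding Gf_def by simp
  then show False using assms suminf_one_ennreal by simp
qed

lemma Gf_finite_sum: assumes hit: "\<exists>n. 1 \<le> n \<and> w n \<in> R"
  shows "Gf R v w = (\<Sum>n<return_time R w. ennreal (v (w n)))"
proof -
  define \<tau> where "\<tau> = return_time R w"
  have t1: "1 \<le> \<tau> \<and> w \<tau> \<in> R" unfolding \<tau>_def return_time_def using hit by (rule LeastI_ex)
  have t2: "\<And>i. 1 \<le> i \<Longrightarrow> i < \<tau> \<Longrightarrow> w i \<notin> R"
    unfolding \<tau>_def return_time_def using not_less_Least by blast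
  have "Gf R v w = (\<Sum>n\<in>{..<\<tau>}. (if (\<forall>i<n. w (Suc i) \<notin> R) then ennreal (v (w n)) else 0))"
    unfolding Gf_def
  proof (rule suminf_finite)
    fix n assume "n \<notin> {..<\<tau>}"
    then have "\<tau> - 1 < n" "Suc (\<tau> - 1) = \<tau>" using t1 by auto
    then show "(if (\<forall>i<n. w (Suc i) \<notin> R) then ennreal (v (w n)) else 0) = 0"
      using t1 by (metis (full_types))
  qed simp
  also have "\<dots> = (\<Sum>n<\<tau>. ennreal (v (w n)))"
  proof (rule sum.cong)
    fix n assume "n \<in> {..<\<tau>}"
    then have "\<forall>i<n. w (Suc i) \<notin> R" using t2 by auto
    then show "(if (\<forall>i<n. w (Suc i) \<notin> R) then ennreal (v (w n)) else 0) = ennreal (v (w n))" by simp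
  qed simp
  finally show ?thesis unfolding \<tau>_def .
qed

lemma meas_return_time: "return_time R \<in> (PS :: (nat \<Rightarrow> 's::finite) measure) \<rightarrow>\<^sub>M count_space UNIV"
proof -
  have [measurable]: "\<And>i. Measurable.pred (PS :: (nat \<Rightarrow> 's::finite) measure) (\<lambda>w. w i \<in> R)"
    by (rule m_coordF) simp
  have "(\<lambda>w. LEAST i. 1 \<le> i \<and> w i \<in> R) \<in> (PS :: (nat \<Rightarrow> 's::finite) measure) \<rightarrow>\<^sub>M count_space UNIV"
    by measurable
  then show ?thesis unfolding return_time_def[abs_def] .
qed

lemma meas_exc: "(\<lambda>w. real_of_int (\<Sum>i<return_time R w. (r :: 's::finite \<Rightarrow> int) (w i))) \<in> borel_measurable (PS :: (nat \<Rightarrow> 's) measure)"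
proof -
  have [measurable]: "\<And>i. (\<lambda>w. real_of_int (r (w i))) \<in> borel_measurable (PS :: (nat \<Rightarrow> 's::finite) measure)"
    by (rule m_real)
  have "(\<lambda>w. (\<lambda>k w. \<Sum>i<k. real_of_int (r (w i))) (return_time R w) w) \<in> borel_measurable (PS :: (nat \<Rightarrow> 's) measure)"
    by (rule measurable_compose_countable'[OF _ meas_return_time]) auto
  then show ?thesis by simp
qed

context fixes K :: "'s::finite \<Rightarrow> 's pmf" and R :: "'s set"
  assumes irr: "irreducible K" and Rne: "R \<noteq> {}"
begin

definition hR :: "('s \<Rightarrow> real) \<Rightarrow> 's \<Rightarrow> real" where
  "hR v x = enn2real (E K x (Hf R v))"

lemma hE_eq: "E K x (Hf R v) = ennreal (hR v x)"
  unfolding hR_def using hE_fin[OF irr Rne] by simp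

lemma hR_nonneg: "0 \<le> hR v x"
  unfolding hR_def by simp

lemma sumE: assumes "\<And>s. 0 \<le> f s"
  shows "ennreal (\<Sum>s\<in>UNIV. pmf (K x) s * f s) = (\<Sum>s\<in>UNIV. ennreal (pmf (K x) s) * ennreal (f s))"
  using assms by (subst sum_ennreal[symmetric]) (auto simp: ennreal_mult)

lemma hR_rec: assumes v: "\<And>s. 0 \<le> v s"
  shows "hR v x = (if x \<in> R then 0 else v x + (\<Sum>s\<in>UNIV. pmf (K x) s * hR v s))"
proof -
  have S: "0 \<le> (\<Sum>s\<in>UNIV. pmf (K x) s * hR v s)" by (auto intro!: sum_nonneg simp: hR_nonneg)
  have "ennreal (hR v x) = (if x \<in> R then 0 else ennreal (v x) + (\<Sum>s\<in>UNIV. ennreal (pmf (K x) s) * ennreal (hR v s)))"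
    using hE_rec[where K=K and x=x and R=R and v=v] by (simp only: hE_eq)
  also have "\<dots> = ennreal (if x \<in> R then 0 else v x + (\<Sum>s\<in>UNIV. pmf (K x) s * hR v s))"
    using v S by (simp add: sumE[OF hR_nonneg])
  finally show ?thesis
    using v S by (subst (asm) ennreal_inj) (auto simp: hR_nonneg)
qed

lemma gE_eq: assumes v: "\<And>s. 0 \<le> v s"
  shows "E K x (Gf R v) = ennreal (v x + (\<Sum>s\<in>UNIV. pmf (K x) s * hR v s))"
proof -
  have S: "0 \<le> (\<Sum>s\<in>UNIV. pmf (K x) s * hR v s)" by (auto intro!: sum_nonneg simp: hR_nonneg)
  show ?thesis using v S by (simp add: gE hE_eq sumE[OF hR_nonneg])
qed

lemma Gf_AE_fin: assumes v: "\<And>s. 0 \<le> v s"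
  shows "AE \<omega> in noise K. Gf R v (run x \<omega>) \<noteq> \<infinity>"
proof (rule nn_integral_PInf_AE)
  show "(\<lambda>\<omega>. Gf R v (run x \<omega>)) \<in> borel_measurable (noise K)"
    by (rule measurable_compose[OF measurable_run meas_Gf])
  have "integral\<^sup>N (noise K) (\<lambda>\<omega>. Gf R v (run x \<omega>)) = E K x (Gf R v)" by (simp add: E_def)
  then show "integral\<^sup>N (noise K) (\<lambda>\<omega>. Gf R v (run x \<omega>)) \<noteq> \<infinity>" using gE_eq[where v=v, OF v] by simp
qed

lemma AE_hit: "AE \<omega> in noise K. \<exists>n. 1 \<le> n \<and> run x \<omega> n \<in> R"
proof -
  have "AE \<omega> in noise K. Gf R (\<lambda>_. 1) (run x \<omega>) \<noteq> \<infinity>" by (rule Gf_AE_fin) simp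
  then show ?thesis by eventually_elim (rule Gf_hit)
qed

lemma integral_Gf: assumes v: "\<And>s. 0 \<le> v s"
  shows "integrable (noise K) (\<lambda>\<omega>. enn2real (Gf R v (run x \<omega>)))"
    and "(\<integral>\<omega>. enn2real (Gf R v (run x \<omega>)) \<partial>noise K) = v x + (\<Sum>s\<in>UNIV. pmf (K x) s * hR v s)"
proof -
  have m: "(\<lambda>\<omega>. Gf R v (run x \<omega>)) \<in> borel_measurable (noise K)"
    by (rule measurable_compose[OF measurable_run meas_Gf])
  have m2: "(\<lambda>\<omega>. enn2real (Gf R v (run x \<omega>))) \<in> borel_measurable (noise K)"
    using m by measurable
  have eq: "(\<integral>\<^sup>+\<omega>. ennreal (enn2real (Gf R v (run x \<omega>))) \<partial>noise K) = E K x (Gf R v)"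
    unfolding E_def
  proof (rule nn_integral_cong_AE)
    show "AE \<omega> in noise K. ennreal (enn2real (Gf R v (run x \<omega>))) = Gf R v (run x \<omega>)"
      using Gf_AE_fin[where x=x and v=v, OF v] by eventually_elim (simp add: less_top[symmetric])
  qed
  show "integrable (noise K) (\<lambda>\<omega>. enn2real (Gf R v (run x \<omega>)))"
    by (rule integrableI_nonneg[OF m2]) (simp_all add: eq gE_eq v)
  show "(\<integral>\<omega>. enn2real (Gf R v (run x \<omega>)) \<partial>noise K) = v x + (\<Sum>s\<in>UNIV. pmf (K x) s * hR v s)"
  proof -
    have S: "0 \<le> (\<Sum>s\<in>UNIV. pmf (K x) s * hR v s)" by (auto intro!: sum_nonneg simp: hR_nonneg)
    show ?thesis
      by (subst integral_eq_nn_integral[OF m2]) (use v S in \<open>simp_all add: eq gE_eq del: ennreal_plus\<close>)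
  qed
qed

end

definition rp :: "('s \<Rightarrow> int) \<Rightarrow> 's \<Rightarrow> real" where "rp r s = real_of_int (max (r s) 0)"
definition rm :: "('s \<Rightarrow> int) \<Rightarrow> 's \<Rightarrow> real" where "rm r s = real_of_int (max (- r s) 0)"

lemma rp_nonneg: "0 \<le> rp r s" and rm_nonneg: "0 \<le> rm r s" by (simp_all add: rp_def rm_def)
lemma rp_rm: "rp r s - rm r s = real_of_int (r s)" by (simp add: rp_def rm_def)

context fixes K :: "'s::finite \<Rightarrow> 's pmf" and R :: "'s set" and r :: "'s \<Rightarrow> int"
  assumes irr: "irreducible K" and Rne: "R \<noteq> {}"
begin

definition hh :: "'s \<Rightarrow> real" where "hh x = hR K R (rp r) x - hR K R (rm r) x"

lemma hh_R: "x \<in> R \<Longrightarrow> hh x = 0"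
  unfolding hh_def
  by (subst (1 2) hR_rec[OF irr Rne]) (auto simp: rp_nonneg rm_nonneg)

lemma hh_notR: "x \<notin> R \<Longrightarrow> hh x = real_of_int (r x) + (\<Sum>s\<in>UNIV. pmf (K x) s * hh s)"
  unfolding hh_def
  by (subst (1 2) hR_rec[OF irr Rne])
     (auto simp: rp_nonneg rm_nonneg rp_rm[symmetric] sum_subtractf right_diff_distrib)

lemma mu_eq: "mu K r R u = real_of_int (r u) + (\<Sum>s\<in>UNIV. pmf (K u) s * hh s)"
proof -
  define Gp where "Gp \<omega> = enn2real (Gf R (rp r) (run u \<omega>))" for \<omega>
  define Gm where "Gm \<omega> = enn2real (Gf R (rm r) (run u \<omega>))" for \<omega>
  have mGp: "Gp \<in> borel_measurable (noise K)" unfolding Gp_def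
    using measurable_compose[OF measurable_run meas_Gf] by measurable
  have mGm: "Gm \<in> borel_measurable (noise K)" unfolding Gm_def
    using measurable_compose[OF measurable_run meas_Gf] by measurable
  have mf: "(\<lambda>\<omega>. real_of_int (\<Sum>i<return_time R (run u \<omega>). r (run u \<omega> i))) \<in> borel_measurable (noise K)"
    by (rule measurable_compose[OF measurable_run meas_exc])
  have ae: "AE \<omega> in noise K. real_of_int (\<Sum>i<return_time R (run u \<omega>). r (run u \<omega> i)) = Gp \<omega> - Gm \<omega>"
    using AE_hit[OF irr Rne, of u]
  proof eventually_elim
    case (elim \<omega>)
    define w where "w = run u \<omega>"
    have hit: "\<exists>n. 1 \<le> n \<and> w n \<in> R" using elim unfolding w_def .
    have eq: "enn2real (Gf R v w) = (\<Sum>n<return_time R w. v (w n))" if "\<And>s. 0 \<le> v s" for v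
      using that by (simp add: Gf_finite_sum[OF hit] sum_ennreal sum_nonneg)
    have "Gp \<omega> - Gm \<omega> = (\<Sum>n<return_time R w. rp r (w n)) - (\<Sum>n<return_time R w. rm r (w n))"
      unfolding Gp_def Gm_def w_def[symmetric] by (simp add: eq rp_nonneg rm_nonneg)
    also have "\<dots> = real_of_int (\<Sum>i<return_time R w. r (w i))"
      by (simp add: sum_subtractf[symmetric] rp_rm)
    finally show ?case unfolding w_def by simp
  qed
  have "mu K r R u = (\<integral>\<omega>. Gp \<omega> - Gm \<omega> \<partial>noise K)"
    unfolding mu_def Exp_from_def by (rule integral_cong_AE[OF mf _ ae]) (use mGp mGm in measurable)
  also have "\<dots> = (\<integral>\<omega>. Gp \<omega> \<partial>noise K) - (\<integral>\<omega>. Gm \<omega> \<partial>noise K)"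
    unfolding Gp_def Gm_def
    by (rule Bochner_Integration.integral_diff; rule integral_Gf(1)[OF irr Rne]; simp add: rp_nonneg rm_nonneg)
  also have "\<dots> = real_of_int (r u) + (\<Sum>s\<in>UNIV. pmf (K u) s * hh s)"
    unfolding Gp_def Gm_def hh_def
    by (subst (1 2) integral_Gf(2)[OF irr Rne]) 
       (auto simp: rp_nonneg rm_nonneg rp_rm[symmetric] sum_subtractf right_diff_distrib)
  finally show ?thesis .
qed

end

definition Sr :: "('s \<Rightarrow> int) \<Rightarrow> nat \<Rightarrow> (nat \<Rightarrow> 's) \<Rightarrow> real" where
  "Sr r n w = (\<Sum>i<n. real_of_int (r (w i)))"

definition Div :: "('s \<Rightarrow> int) \<Rightarrow> (nat \<Rightarrow> 's) \<Rightarrow> bool" where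
  "Div r w \<longleftrightarrow> (\<forall>A. eventually (\<lambda>n. A < Sr r n w) sequentially)"

lemma Sr_Suc_case: "Sr r (Suc n) (case_nat x w) = real_of_int (r x) + Sr r n w"
  unfolding Sr_def by (simp only: sum.lessThan_Suc_shift) simp

lemma Sr_Suc_shift: "Sr r (Suc n) w = real_of_int (r (w 0)) + Sr r n (\<lambda>i. w (Suc i))"
  unfolding Sr_def by (simp only: sum.lessThan_Suc_shift)

lemma meas_shift: "(\<lambda>w i. w (Suc i)) \<in> (PS :: (nat \<Rightarrow> 's::finite) measure) \<rightarrow>\<^sub>M PS"
  by (rule measurable_PiM_single') (auto intro: coord_meas)

lemma meas_Sr: "Sr r n \<in> borel_measurable (PS :: (nat \<Rightarrow> 's::finite) measure)"
proof -
  have [measurable]: "\<And>i. (\<lambda>w. real_of_int (r (w i))) \<in> borel_measurable (PS :: (nat \<Rightarrow> 's::finite) measure)"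
    by (rule m_real)
  show ?thesis unfolding Sr_def[abs_def] by measurable
qed

fun V :: "('s \<Rightarrow> int) \<Rightarrow> ('s \<Rightarrow> real) \<Rightarrow> real \<Rightarrow> nat \<Rightarrow> real \<Rightarrow> (nat \<Rightarrow> 's) \<Rightarrow> real" where
  "V r hf a 0 s w = s + hf (w 0)"
| "V r hf a (Suc n) s w = (if s \<le> -a then s + hf (w 0) else V r hf a n (s + real_of_int (r (w 0))) (\<lambda>i. w (Suc i)))"

lemma meas_V: "V r hf a n s \<in> borel_measurable (PS :: (nat \<Rightarrow> 's::finite) measure)"
proof (induction n arbitrary: s)
  case 0
  have "(\<lambda>w. hf (w 0)) \<in> borel_measurable (PS :: (nat \<Rightarrow> 's::finite) measure)" by (rule m_real)
  then show ?case by simp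
next
  case (Suc n)
  have h0: "(\<lambda>w. hf (w 0)) \<in> borel_measurable (PS :: (nat \<Rightarrow> 's::finite) measure)" by (rule m_real)
  have c0: "(\<lambda>w. w 0) \<in> (PS :: (nat \<Rightarrow> 's::finite) measure) \<rightarrow>\<^sub>M count_space UNIV" by (rule coord_meas)
  have "(\<lambda>w. (\<lambda>y w. V r hf a n (s + real_of_int (r y)) (\<lambda>i. w (Suc i))) (w 0) w) \<in> borel_measurable (PS :: (nat \<Rightarrow> 's::finite) measure)"
    by (rule measurable_compose_countable'[OF _ c0])
       (auto intro: measurable_compose[OF meas_shift Suc.IH])
  then show ?case using h0 by (simp add: measurable_If)
qed

lemma V_lower: assumes r: "\<And>x. -1 \<le> r x" and C: "\<And>x. \<bar>hf x\<bar> \<le> C"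
  shows "-a - 1 \<le> s \<Longrightarrow> -a - 1 - C \<le> V r hf a n s w"
proof (induction n arbitrary: s w)
  case 0 then show ?case using C[of "w 0"] by simp
next
  case (Suc n)
  show ?case
  proof (cases "s \<le> -a")
    case True then show ?thesis using Suc.prems C[of "w 0"] by simp
  next
    case False
    have "-a - 1 \<le> s + real_of_int (r (w 0))" using False r[of "w 0"] by linarith
    then show ?thesis using False Suc.IH by simp
  qed
qed

lemma V_eq: "(\<forall>m\<le>n. -a < s + Sr r m w) \<Longrightarrow> V r hf a n s w = s + Sr r n w + hf (w n)"
proof (induction n arbitrary: s w)
  case 0 then show ?case by (simp add: Sr_def)
next
  case (Suc n)
  have ns: "\<not> s \<le> -a" using Suc.prems[rule_format, of 0] by (simp add: Sr_def)
  have "\<forall>m\<le>n. -a < (s + real_of_int (r (w 0))) + Sr r m (\<lambda>i. w (Suc i))"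
    using Suc.prems by (auto simp: Sr_Suc_shift add.assoc)
  then show ?case using ns Suc.IH by (simp add: Sr_Suc_shift add.assoc)
qed

context fixes K :: "'s::finite \<Rightarrow> 's pmf" and r :: "'s \<Rightarrow> int" and hf :: "'s \<Rightarrow> real"
  assumes r: "\<And>x. -1 \<le> r x" and super: "\<And>x. real_of_int (r x) + (\<Sum>y\<in>UNIV. pmf (K x) y * hf y) \<le> hf x"
begin

definition C where "C = Max (range (\<lambda>x. \<bar>hf x\<bar>))"
lemma C: "\<bar>hf x\<bar> \<le> C" unfolding C_def by (rule Max_ge) auto

lemma V_super: assumes a: "0 \<le> a" and s: "-a - 1 \<le> s"
  shows "E K x (\<lambda>w. ennreal (V r hf a n s w + (a + 1 + C))) \<le> ennreal (s + hf x + (a + 1 + C))"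
  using s
proof (induction n arbitrary: s x)
  case 0
  have "E K x (\<lambda>w. ennreal (V r hf a 0 s w + (a + 1 + C))) = E K x (\<lambda>_. ennreal (s + hf x + (a + 1 + C)))"
    unfolding E_def by simp
  then show ?case by simp
next
  case (Suc n)
  let ?B = "a + 1 + C"
  have m: "(\<lambda>w. ennreal (V r hf a (Suc n) s w + ?B)) \<in> borel_measurable PS"
    using meas_V[of r hf a "Suc n" s] by measurable
  have "E K x (\<lambda>w. ennreal (V r hf a (Suc n) s w + ?B)) =
    (\<Sum>y\<in>UNIV. ennreal (pmf (K x) y) * E K y (\<lambda>w. ennreal (V r hf a (Suc n) s (case_nat x w) + ?B)))"
    by (rule E_OS[OF m])
  also have "\<dots> \<le> ennreal (s + hf x + ?B)"
  proof (cases "s \<le> -a")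
    case True
    then have "(\<Sum>y\<in>UNIV. ennreal (pmf (K x) y) * E K y (\<lambda>w. ennreal (V r hf a (Suc n) s (case_nat x w) + ?B)))
       = ennreal (s + hf x + ?B)"
      by (simp add: sum_distrib_right[symmetric] sum_p sum_p_enn)
    then show ?thesis by simp
  next
    case False
    let ?s = "s + real_of_int (r x)"
    have s': "-a - 1 \<le> ?s" using False r[of x] by linarith
    have "(\<Sum>y\<in>UNIV. ennreal (pmf (K x) y) * E K y (\<lambda>w. ennreal (V r hf a (Suc n) s (case_nat x w) + ?B)))
       = (\<Sum>y\<in>UNIV. ennreal (pmf (K x) y) * E K y (\<lambda>w. ennreal (V r hf a n ?s w + ?B)))"
      using False by simp
    also have "\<dots> \<le> (\<Sum>y\<in>UNIV. ennreal (pmf (K x) y) * ennreal (?s + hf y + ?B))"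
      by (intro sum_mono mult_left_mono Suc.IH s') auto
    also have "\<dots> = ennreal (\<Sum>y\<in>UNIV. pmf (K x) y * (?s + hf y + ?B))"
    proof -
      have "0 \<le> ?s + hf y + ?B" for y using s' C[of y] by linarith
      then show ?thesis by (subst sum_ennreal[symmetric]) (auto simp: ennreal_mult)
    qed
    also have "(\<Sum>y\<in>UNIV. pmf (K x) y * (?s + hf y + ?B)) = ?s + ?B + (\<Sum>y\<in>UNIV. pmf (K x) y * hf y)"
    proof -
      have e1: "(\<Sum>y\<in>UNIV. pmf (K x) y * c) = c" for c
        by (simp add: sum_distrib_right[symmetric] sum_p)
      have "(\<Sum>y\<in>UNIV. pmf (K x) y * (?s + hf y + ?B)) = (\<Sum>y\<in>UNIV. pmf (K x) y * (?s + ?B) + pmf (K x) y * hf y)"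
        by (intro sum.cong) (auto simp: algebra_simps)
      also have "\<dots> = ?s + ?B + (\<Sum>y\<in>UNIV. pmf (K x) y * hf y)"
        by (simp only: sum.distrib e1)
      finally show ?thesis .
    qed
    also have "\<dots> \<le> s + hf x + ?B" using super[of x] by linarith
    finally show ?thesis by (simp add: ennreal_leI)
  qed
  finally show ?case .
qed

lemma AE_not_Div: "AE \<omega> in noise K. \<not> Div r (run t \<omega>)"
proof -
  have "AE \<omega> in noise K. \<not> (Div r (run t \<omega>) \<and> (\<forall>m. - real a < Sr r m (run t \<omega>)))" for a :: nat
  proof -
    let ?B = "real a + 1 + C"
    define X where "X n \<omega> = ennreal (V r hf (real a) n 0 (run t \<omega>) + ?B)" for n \<omega>
    have mX: "X n \<in> borel_measurable (noise K)" for n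
      unfolding X_def using measurable_compose[OF measurable_run meas_V[of r hf "real a" n 0]] by measurable
    have "(\<integral>\<^sup>+\<omega>. liminf (\<lambda>n. X n \<omega>) \<partial>noise K) \<le> liminf (\<lambda>n. integral\<^sup>N (noise K) (X n))"
      by (rule nn_integral_liminf) (rule mX)
    also have "\<dots> \<le> ennreal (0 + hf t + ?B)"
    proof (rule Liminf_le)
      show "\<forall>\<^sub>F n in sequentially. integral\<^sup>N (noise K) (X n) \<le> ennreal (0 + hf t + ?B)"
        using V_super[of "real a" 0 t] unfolding X_def E_def by simp
    qed simp
    also have "\<dots> < \<infinity>" by simp
    finally have fin: "(\<integral>\<^sup>+\<omega>. liminf (\<lambda>n. X n \<omega>) \<partial>noise K) \<noteq> \<infinity>" by simp
    have "AE \<omega> in noise K. liminf (\<lambda>n. X n \<omega>) \<noteq> \<infinity>"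
      by (rule nn_integral_PInf_AE[OF _ fin]) (use mX in measurable)
    then show ?thesis
    proof eventually_elim
      case (elim \<omega>)
      show ?case
      proof
        assume H: "Div r (run t \<omega>) \<and> (\<forall>m. - real a < Sr r m (run t \<omega>))"
        have lb: "ennreal M \<le> liminf (\<lambda>n. X n \<omega>)" for M
        proof (rule Liminf_bounded)
          have "eventually (\<lambda>n. M + C < Sr r n (run t \<omega>)) sequentially" using H unfolding Div_def by blast
          then show "\<forall>\<^sub>F n in sequentially. ennreal M \<le> X n \<omega>"
          proof eventually_elim
            case (elim n)
            have "V r hf (real a) n 0 (run t \<omega>) = Sr r n (run t \<omega>) + hf (run t \<omega> n)"
              using V_eq[of n "real a" 0 r "run t \<omega>" hf] H by simp
            then have "M \<le> V r hf (real a) n 0 (run t \<omega>) + ?B"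
              using elim C[of "run t \<omega> n"] by linarith
            then show ?case unfolding X_def by (rule ennreal_leI)
          qed
        qed
        obtain M where Meq: "liminf (\<lambda>n. X n \<omega>) = ennreal M" "0 \<le> M"
          using elim by (cases "liminf (\<lambda>n. X n \<omega>)") auto
        have "ennreal (M + 1) \<le> ennreal M" using lb[of "M + 1"] Meq(1) by simp
        then show False using \<open>0 \<le> M\<close> by simp
      qed
    qed
  qed
  then have "AE \<omega> in noise K. \<forall>a::nat. \<not> (Div r (run t \<omega>) \<and> (\<forall>m. - real a < Sr r m (run t \<omega>)))"
    by (subst AE_all_countable) auto
  then show ?thesis
  proof eventually_elim
    case (elim \<omega>)
    show ?case
    proof
      assume D: "Div r (run t \<omega>)"
      then obtain N where N: "\<And>n. N \<le> n \<Longrightarrow> 0 < Sr r n (run t \<omega>)"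
        unfolding Div_def eventually_sequentially by blast
      have "- real (N + 1) < Sr r m (run t \<omega>)" for m
      proof (cases "N \<le> m")
        case True then show ?thesis using N[of m] by simp
      next
        case False
        have ri: "-1 \<le> real_of_int (r (run t \<omega> i))" for i using r[of "run t \<omega> i"] by linarith
        have "(\<Sum>i<m. (-1::real)) \<le> (\<Sum>i<m. real_of_int (r (run t \<omega> i)))"
          by (intro sum_mono ri)
        then have "- real m \<le> Sr r m (run t \<omega>)" unfolding Sr_def by simp
        then show ?thesis using False by simp
      qed
      then show False using elim D by blast
    qed
  qed
qed

end

context fixes K :: "'s::finite \<Rightarrow> 's pmf" and r :: "'s \<Rightarrow> int" and phi :: "'s \<Rightarrow> real"
  and l rho :: real
  assumes l: "0 < l" and rho: "rho < 1"
    and contr: "\<And>x. (\<Sum>y\<in>UNIV. pmf (K x) y * exp (- l * (real_of_int (r x) + phi y - phi x))) \<le> rho"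
begin

definition Z :: "nat \<Rightarrow> (nat \<Rightarrow> 's) \<Rightarrow> ennreal" where
  "Z n w = ennreal (exp (- l * (Sr r n w + phi (w n))))"

lemma meas_Z: "Z n \<in> borel_measurable PS"
proof -
  have [measurable]: "(\<lambda>w. phi (w n)) \<in> borel_measurable (PS :: (nat \<Rightarrow> 's) measure)" by (rule m_real)
  have [measurable]: "Sr r n \<in> borel_measurable (PS :: (nat \<Rightarrow> 's) measure)" by (rule meas_Sr)
  show ?thesis unfolding Z_def[abs_def] by measurable
qed

lemma rho_nonneg: "0 \<le> rho"
  using contr[of undefined] by (rule order_trans[rotated]) (auto intro!: sum_nonneg)

lemma Z_E: "E K x (Z n) \<le> ennreal (rho ^ n * exp (- l * phi x))"
proof (induction n arbitrary: x)
  case 0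
  have "E K x (Z 0) = E K x (\<lambda>_. ennreal (exp (- l * phi x)))"
    unfolding E_def Z_def by (simp add: Sr_def)
  then show ?case by simp
next
  case (Suc n)
  have "E K x (Z (Suc n)) = (\<Sum>y\<in>UNIV. ennreal (pmf (K x) y) * E K y (\<lambda>w. Z (Suc n) (case_nat x w)))"
    by (rule E_OS[OF meas_Z])
  also have "\<dots> = (\<Sum>y\<in>UNIV. ennreal (pmf (K x) y) * (ennreal (exp (- l * real_of_int (r x))) * E K y (Z n)))"
  proof (intro sum.cong refl arg_cong2[where f="(*)"])
    fix y
    have "(\<lambda>w. Z (Suc n) (case_nat x w)) = (\<lambda>w. ennreal (exp (- l * real_of_int (r x))) * Z n w)"
      by (rule ext) (simp add: Z_def Sr_Suc_case ennreal_mult[symmetric] exp_add[symmetric] algebra_simps)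
    then show "E K y (\<lambda>w. Z (Suc n) (case_nat x w)) = ennreal (exp (- l * real_of_int (r x))) * E K y (Z n)"
      by (simp add: E_cmult meas_Z)
  qed
  also have "\<dots> \<le> (\<Sum>y\<in>UNIV. ennreal (pmf (K x) y) * (ennreal (exp (- l * real_of_int (r x))) * ennreal (rho ^ n * exp (- l * phi y))))"
    by (intro sum_mono mult_left_mono Suc.IH) auto
  also have "\<dots> = ennreal (\<Sum>y\<in>UNIV. pmf (K x) y * (exp (- l * real_of_int (r x)) * (rho ^ n * exp (- l * phi y))))"
    using rho_nonneg by (subst sum_ennreal[symmetric]) (auto simp: ennreal_mult)
  also have "(\<Sum>y\<in>UNIV. pmf (K x) y * (exp (- l * real_of_int (r x)) * (rho ^ n * exp (- l * phi y))))
     = rho ^ n * exp (- l * phi x) * (\<Sum>y\<in>UNIV. pmf (K x) y * exp (- l * (real_of_int (r x) + phi y - phi x)))"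
  proof -
    have "exp (- l * real_of_int (r x)) * exp (- l * phi y) = exp (- l * phi x) * exp (- l * (real_of_int (r x) + phi y - phi x))" for y
      by (simp add: exp_add[symmetric] algebra_simps)
    then show ?thesis by (simp add: sum_distrib_left algebra_simps)
  qed
  also have "\<dots> \<le> rho ^ n * exp (- l * phi x) * rho"
    using rho_nonneg contr[of x] by (intro mult_left_mono) auto
  finally have *: "E K x (Z (Suc n)) \<le> ennreal (rho ^ n * exp (- l * phi x) * rho)" by (simp add: ennreal_leI)
  have "rho ^ n * exp (- l * phi x) * rho = rho ^ Suc n * exp (- l * phi x)" by simp
  then show ?case using * by metis
qed

lemma AE_Div: "AE \<omega> in noise K. Div r (run t \<omega>)"
proof -
  have "E K t (\<lambda>w. \<Sum>n. Z n w) = (\<Sum>n. E K t (Z n))"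
    by (rule E_suminf) (rule meas_Z)
  also have "\<dots> \<le> (\<Sum>n. ennreal (rho ^ n * exp (- l * phi t)))"
    by (intro suminf_le Z_E) auto
  also have "\<dots> = ennreal (\<Sum>n. rho ^ n * exp (- l * phi t))"
    using rho_nonneg rho by (intro suminf_ennreal2) (auto intro!: summable_mult2 summable_geometric)
  also have "\<dots> < \<infinity>" by simp
  finally have fin: "E K t (\<lambda>w. \<Sum>n. Z n w) \<noteq> \<infinity>" by simp
  have "AE \<omega> in noise K. (\<Sum>n. Z n (run t \<omega>)) \<noteq> \<infinity>"
  proof (rule nn_integral_PInf_AE)
    show "(\<lambda>\<omega>. \<Sum>n. Z n (run t \<omega>)) \<in> borel_measurable (noise K)"
      using measurable_compose[OF measurable_run meas_Z] by measurable
  qed (use fin in \<open>simp add: E_def\<close>)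
  then show ?thesis
  proof eventually_elim
    case (elim \<omega>)
    define w where "w = run t \<omega>"
    define g where "g n = exp (- l * (Sr r n w + phi (w n)))" for n
    have "summable g"
      using elim unfolding w_def[symmetric] Z_def g_def[symmetric]
      by (intro summable_suminf_not_top) (auto simp: g_def top_unique)
    then have g0: "g \<longlonglongrightarrow> 0" by (rule summable_LIMSEQ_zero)
    define Cp where "Cp = Max (range (\<lambda>x. \<bar>phi x\<bar>))"
    have Cp: "\<bar>phi x\<bar> \<le> Cp" for x unfolding Cp_def by (rule Max_ge) auto
    show ?case unfolding Div_def w_def[symmetric]
    proof
      fix A
      have "eventually (\<lambda>n. g n < exp (- l * (A + Cp))) sequentially"
        by (rule order_tendstoD(2)[OF g0]) simp
      then show "eventually (\<lambda>n. A < Sr r n w) sequentially"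
      proof eventually_elim
        case (elim n)
        then have "- l * (Sr r n w + phi (w n)) < - l * (A + Cp)" unfolding g_def by simp
        then have "A + Cp < Sr r n w + phi (w n)" using l by simp
        then show ?case using Cp[of "w n"] by linarith
      qed
    qed
  qed
qed

end

lemma exp_le_quad: fixes z :: real assumes "\<bar>z\<bar> \<le> 1" shows "exp z \<le> 1 + z + z\<^sup>2"
proof (cases "0 \<le> z")
  case True then show ?thesis using assms exp_bound by auto
next
  case False
  define y where "y = - z"
  have y: "0 < y" "y \<le> 1" using False assms by (auto simp: y_def)
  have "exp z = inverse (exp y)" by (simp add: y_def exp_minus)
  also have "\<dots> \<le> inverse (1 + y)"
    using y by (intro le_imp_inverse_le) auto
  also have "\<dots> \<le> 1 - y + y\<^sup>2"
  proof -
    have "1 \<le> (1 - y + y\<^sup>2) * (1 + y)" using y by (simp add: algebra_simps power2_eq_square power3_eq_cube)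
    then show ?thesis using y by (simp add: field_simps)
  qed
  finally show ?thesis by (simp add: y_def)
qed

lemma Div_nat: "Div r w \<longleftrightarrow> (\<forall>A::nat. \<exists>N. \<forall>n\<ge>N. real A < Sr r n w)"
proof
  assume "Div r w" then show "\<forall>A::nat. \<exists>N. \<forall>n\<ge>N. real A < Sr r n w"
    unfolding Div_def eventually_sequentially by blast
next
  assume H: "\<forall>A::nat. \<exists>N. \<forall>n\<ge>N. real A < Sr r n w"
  show "Div r w" unfolding Div_def eventually_sequentially
  proof
    fix A :: real
    obtain N where "\<forall>n\<ge>N. real (nat \<lceil>A\<rceil>) < Sr r n w" using H by blast
    moreover have "A \<le> real (nat \<lceil>A\<rceil>)" by linarith
    ultimately show "\<exists>N. \<forall>n\<ge>N. A < Sr r n w" by force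
  qed
qed

lemma pred_Div: "Measurable.pred (PS :: (nat \<Rightarrow> 's::finite) measure) (Div r)"
proof -
  have [measurable]: "\<And>n. Sr r n \<in> borel_measurable (PS :: (nat \<Rightarrow> 's::finite) measure)" by (rule meas_Sr)
  have "Measurable.pred (PS :: (nat \<Rightarrow> 's::finite) measure) (\<lambda>w. \<forall>A::nat. \<exists>N::nat. \<forall>n::nat. N \<le> n \<longrightarrow> real A < Sr r n w)"
    by measurable
  then show ?thesis by (simp add: Div_nat[abs_def])
qed

lemma LimInf_Div: "w \<in> LimInf_infty r \<longleftrightarrow> Div r w"
proof -
  have "w \<in> LimInf_infty r \<longleftrightarrow> (\<lambda>n. ereal (real_of_int (\<Sum>i\<le>n. r (w i)))) \<longlonglongrightarrow> \<infinity>"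
    unfolding LimInf_infty_def by (simp add: liminf_PInfty)
  also have "\<dots> \<longleftrightarrow> (\<forall>A. eventually (\<lambda>n. A < Sr r (Suc n) w) sequentially)"
    unfolding tendsto_PInfty Sr_def by (simp add: lessThan_Suc_atMost)
  also have "\<dots> \<longleftrightarrow> Div r w"
  proof -
    have "\<And>A. eventually (\<lambda>n. A < Sr r (Suc n) w) sequentially \<longleftrightarrow> eventually (\<lambda>n. A < Sr r n w) sequentially"
      by (rule eventually_sequentially_Suc)
    then show ?thesis unfolding Div_def by simp
  qed
  finally show ?thesis .
qed


context fixes K :: "'s::finite \<Rightarrow> 's pmf" and R :: "'s set" and r :: "'s \<Rightarrow> int"
  assumes irr: "irreducible K" and Rne: "R \<noteq> {}"
begin

lemma sum_pc: "(\<Sum>y\<in>UNIV. pmf (K x) y * c) = c"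
  by (simp add: sum_distrib_right[symmetric] sum_p)

lemma case1_params:
  assumes pos: "\<forall>u\<in>R. mu K r R u > 0"
  shows "\<exists>phi l rho. 0 < l \<and> rho < 1 \<and>
     (\<forall>x. (\<Sum>y\<in>UNIV. pmf (K x) y * exp (- l * (real_of_int (r x) + phi y - phi x))) \<le> rho)"
proof -
  define q where "q = hR K R (\<lambda>_. 1)"
  have q_R: "q x = 0" if "x \<in> R" for x
    unfolding q_def using hR_rec[OF irr Rne, of "\<lambda>_. 1" x] that by simp
  have q_nR: "q x = 1 + (\<Sum>y\<in>UNIV. pmf (K x) y * q y)" if "x \<notin> R" for x
    unfolding q_def using hR_rec[OF irr Rne, of "\<lambda>_. 1" x] that by simp
  have q_nonneg: "0 \<le> q x" for x unfolding q_def by (rule hR_nonneg[OF irr Rne])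
  define Pq where "Pq x = (\<Sum>y\<in>UNIV. pmf (K x) y * q y)" for x
  define PM where "PM = Max (range Pq)"
  have Pq_PM: "Pq x \<le> PM" for x unfolding PM_def by (rule Max_ge) auto
  have Pq_nonneg: "0 \<le> Pq x" for x unfolding Pq_def by (intro sum_nonneg mult_nonneg_nonneg pmf_nonneg q_nonneg)
  have PM_nonneg: "0 \<le> PM" using Pq_PM[of undefined] Pq_nonneg[of undefined] by linarith
  define m where "m = Min (mu K r R ` R)"
  have finR: "finite R" by simp
  have m_pos: "0 < m" unfolding m_def using pos Rne finR by (subst Min_gr_iff) auto
  have m_le: "m \<le> mu K r R u" if "u \<in> R" for u unfolding m_def using that finR by (intro Min_le) auto
  define \<delta> where "\<delta> = m / (1 + PM)"
  have \<delta>_pos: "0 < \<delta>" using m_pos PM_nonneg by (simp add: \<delta>_def)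
  have m_eq: "m = \<delta> * (1 + PM)" using PM_nonneg by (simp add: \<delta>_def)
  define hh' where "hh' = hh K R r"
  define phi where "phi x = hh' x - \<delta> * q x" for x
  define D where "D x = real_of_int (r x) + (\<Sum>y\<in>UNIV. pmf (K x) y * phi y) - phi x" for x
  have Pphi: "(\<Sum>y\<in>UNIV. pmf (K x) y * phi y) = (\<Sum>y\<in>UNIV. pmf (K x) y * hh' y) - \<delta> * Pq x" for x
    unfolding phi_def Pq_def by (simp add: right_diff_distrib sum_subtractf sum_distrib_left algebra_simps)
  have D_eq: "D x = real_of_int (r x) + (\<Sum>y\<in>UNIV. pmf (K x) y * hh' y) - \<delta> * Pq x - hh' x + \<delta> * q x" for x
    unfolding D_def Pphi by (simp add: phi_def)
  have D_ge: "\<delta> \<le> D x" for x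
  proof (cases "x \<in> R")
    case True
    have "mu K r R x = real_of_int (r x) + (\<Sum>y\<in>UNIV. pmf (K x) y * hh' y)"
      unfolding hh'_def by (rule mu_eq[OF irr Rne])
    moreover have "hh' x = 0" unfolding hh'_def using True by (rule hh_R[OF irr Rne])
    moreover have "\<delta> * Pq x \<le> \<delta> * PM" using \<delta>_pos Pq_PM[of x] by simp
    ultimately show ?thesis using m_le[OF True] True m_eq q_R[OF True]
      unfolding D_eq by (simp add: algebra_simps)
  next
    case False
    have "hh' x = real_of_int (r x) + (\<Sum>y\<in>UNIV. pmf (K x) y * hh' y)"
      unfolding hh'_def using False by (rule hh_notR[OF irr Rne])
    moreover have "q x = 1 + Pq x" unfolding Pq_def using False by (rule q_nR)
    ultimately show ?thesis unfolding D_eq by (simp add: algebra_simps)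
  qed
  define d where "d x y = real_of_int (r x) + phi y - phi x" for x y
  define Cd where "Cd = 1 + Max (range (\<lambda>(x, y). \<bar>d x y\<bar>))"
  have dM: "\<bar>d x y\<bar> \<le> Max (range (\<lambda>(x, y). \<bar>d x y\<bar>))" for x y
    by (rule Max_ge) (auto intro: image_eqI[of _ _ "(x, y)"])
  have d_Cd: "\<bar>d x y\<bar> \<le> Cd" for x y using dM[of x y] unfolding Cd_def by simp
  have Cd_pos: "0 < Cd" using dM[of undefined undefined] abs_ge_zero[of "d undefined undefined"]
    unfolding Cd_def by linarith
  define l where "l = min (1 / Cd) (\<delta> / (2 * Cd\<^sup>2))"
  have l_pos: "0 < l" using Cd_pos \<delta>_pos by (simp add: l_def)
  have lCd: "l * Cd \<le> 1" using Cd_pos by (simp add: l_def min_def field_simps)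
  have lCd2: "l * Cd\<^sup>2 \<le> \<delta> / 2"
  proof -
    have "l \<le> \<delta> / (2 * Cd\<^sup>2)" by (simp add: l_def)
    then have "l * Cd\<^sup>2 \<le> \<delta> / (2 * Cd\<^sup>2) * Cd\<^sup>2" using Cd_pos by (intro mult_right_mono) auto
    then show ?thesis using Cd_pos by (simp add: field_simps)
  qed
  define rho where "rho = 1 - l * \<delta> / 2"
  have rho_lt: "rho < 1" using l_pos \<delta>_pos by (simp add: rho_def)
  have bound: "(\<Sum>y\<in>UNIV. pmf (K x) y * exp (- l * d x y)) \<le> rho" for x
  proof -
    have e: "exp (- l * d x y) \<le> 1 - l * d x y + l\<^sup>2 * Cd\<^sup>2" for y
    proof -
      have a: "\<bar>- l * d x y\<bar> \<le> 1"
      proof -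
        have "\<bar>- l * d x y\<bar> = l * \<bar>d x y\<bar>" using l_pos by (simp add: abs_mult)
        also have "\<dots> \<le> l * Cd" using l_pos d_Cd[of x y] by (intro mult_left_mono) auto
        finally show ?thesis using lCd by linarith
      qed
      have "(- l * d x y)\<^sup>2 \<le> l\<^sup>2 * Cd\<^sup>2"
      proof -
        have "(- l * d x y)\<^sup>2 = (l * \<bar>d x y\<bar>)\<^sup>2" using l_pos by (simp add: power2_eq_square algebra_simps)
        also have "\<dots> \<le> (l * Cd)\<^sup>2" using l_pos d_Cd[of x y] by (intro power_mono mult_left_mono) auto
        finally show ?thesis by (simp add: power_mult_distrib)
      qed
      then show ?thesis using exp_le_quad[OF a] by linarith
    qed
    have "(\<Sum>y\<in>UNIV. pmf (K x) y * exp (- l * d x y)) \<le> (\<Sum>y\<in>UNIV. pmf (K x) y * (1 - l * d x y + l\<^sup>2 * Cd\<^sup>2))"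
      by (intro sum_mono mult_left_mono e) auto
    also have "\<dots> = 1 + l\<^sup>2 * Cd\<^sup>2 - l * (\<Sum>y\<in>UNIV. pmf (K x) y * d x y)"
    proof -
      have "(\<Sum>y\<in>UNIV. pmf (K x) y * (1 - l * d x y + l\<^sup>2 * Cd\<^sup>2)) =
          (\<Sum>y\<in>UNIV. pmf (K x) y * (1 + l\<^sup>2 * Cd\<^sup>2) - l * (pmf (K x) y * d x y))"
        by (intro sum.cong) (auto simp: algebra_simps)
      also have "\<dots> = 1 + l\<^sup>2 * Cd\<^sup>2 - l * (\<Sum>y\<in>UNIV. pmf (K x) y * d x y)"
        by (simp only: sum_subtractf sum_pc sum_distrib_left[symmetric])
      finally show ?thesis .
    qed
    also have "(\<Sum>y\<in>UNIV. pmf (K x) y * d x y) = D x"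
    proof -
      have "(\<Sum>y\<in>UNIV. pmf (K x) y * d x y) = (\<Sum>y\<in>UNIV. pmf (K x) y * (real_of_int (r x) - phi x) + pmf (K x) y * phi y)"
        unfolding d_def by (intro sum.cong) (auto simp: algebra_simps)
      also have "\<dots> = D x" unfolding D_def by (simp only: sum.distrib sum_pc)
      finally show ?thesis .
    qed
    also have "1 + l\<^sup>2 * Cd\<^sup>2 - l * D x \<le> rho"
    proof -
      have "l * \<delta> \<le> l * D x" using l_pos D_ge[of x] by (intro mult_left_mono) auto
      moreover have "l\<^sup>2 * Cd\<^sup>2 \<le> l * (\<delta> / 2)"
        using lCd2 l_pos by (simp add: power2_eq_square mult.assoc mult_left_mono)
      ultimately show ?thesis unfolding rho_def by linarith
    qed
    finally show ?thesis .
  qed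
  show ?thesis using l_pos rho_lt bound unfolding d_def by blast
qed

end

theorem mainTheorem16:
  fixes K :: "'s::finite \<Rightarrow> 's pmf" and r :: "'s \<Rightarrow> int" and R :: "'s set" and t :: 's
  assumes "irreducible K"
    and "\<forall>s. r s \<in> {-1, 0, 1}"
    and "R \<noteq> {}"
    and "t \<in> R"
  shows "((\<forall>u\<in>R. mu K r R u > 0) \<longrightarrow> Prob_from K t (LimInf_infty r) = 1)
       \<and> ((\<forall>u\<in>R. mu K r R u \<le> 0) \<longrightarrow> Prob_from K t (LimInf_infty r) = 0)"
proof -
  interpret N: prob_space "noise K" by (rule prob_space_noise)
  have sets: "{\<omega> \<in> space (noise K). run t \<omega> \<in> LimInf_infty r} \<in> sets (noise K)"
  proof -
    have "Measurable.pred (noise K) (\<lambda>\<omega>. Div r (run t \<omega>))"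
      by (rule measurable_compose[OF measurable_run pred_Div])
    then show ?thesis unfolding pred_def by (simp add: LimInf_Div)
  qed
  have Pdef: "Prob_from K t (LimInf_infty r) = N.prob {\<omega> \<in> space (noise K). run t \<omega> \<in> LimInf_infty r}"
    by (simp add: Prob_from_def)
  have r1: "-1 \<le> r x" for x using assms(2)[rule_format, of x] by auto
  show ?thesis
  proof (intro conjI impI)
    assume pos: "\<forall>u\<in>R. 0 < mu K r R u"
    obtain phi l rho where l: "0 < l" and rho: "rho < 1"
      and contr: "\<And>x. (\<Sum>y\<in>UNIV. pmf (K x) y * exp (- l * (real_of_int (r x) + phi y - phi x))) \<le> rho"
      using case1_params[OF assms(1) assms(3) pos] by blast
    have "AE \<omega> in noise K. Div r (run t \<omega>)" by (rule AE_Div[OF l rho contr])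
    then have "AE \<omega> in noise K. run t \<omega> \<in> LimInf_infty r" by (simp add: LimInf_Div)
    then show "Prob_from K t (LimInf_infty r) = 1" using N.prob_Collect_eq_1[OF sets] Pdef by simp
  next
    assume nonpos: "\<forall>u\<in>R. mu K r R u \<le> 0"
    have super: "real_of_int (r x) + (\<Sum>y\<in>UNIV. pmf (K x) y * hh K R r y) \<le> hh K R r x" for x
    proof (cases "x \<in> R")
      case True
      have "mu K r R x \<le> 0" using nonpos True by blast
      then show ?thesis using mu_eq[OF assms(1) assms(3), of r x] hh_R[OF assms(1) assms(3) True, of r]
        by simp
    next
      case False
      then show ?thesis using hh_notR[OF assms(1) assms(3) False, of r] by simp
    qed
    have "AE \<omega> in noise K. \<not> Div r (run t \<omega>)" by (rule AE_not_Div[OF r1 super])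
    then have "AE \<omega> in noise K. \<not> run t \<omega> \<in> LimInf_infty r" by (simp add: LimInf_Div)
    then show "Prob_from K t (LimInf_infty r) = 0" using N.prob_Collect_eq_0[OF sets] Pdef by simp
  qed
qed


end
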